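(* Let $n\ge2$ and let $c_0,c_1:S^1\to\mathbb R^n$ be smooth regular (immersed) closed curves. For every $\varepsilon>0$ there is a homotopy $C\in\mathbb C$ connecting $c_0$ to $c_1$ with $E^N(C)<\varepsilon$. Consequently the geodesic distance induced by the geometric $H^0$ metric $\langle h,k\rangle_c=\int\langle\pi_Nh,\pi_Nk\rangle\,ds$ vanishes identically.
   Context: $S^1=\mathbb R/2\pi\mathbb Z$, $I=S^1\times[0,1]$. The class $\mathbb C$ consists of all $C:I\to\mathbb R^n$ continuous on $I$, locally Lipschitz on $S^1\times(0,1)$, with $C(\cdot,0)=c_0$, $C(\cdot,1)=c_1$. $T=\partial_\theta C/|\partial_\theta C|$ ($T=0$ where $\partial_\theta C=0$), $\pi_Nw=w-\langle w,T\rangle T$, $E^N(C)=\int_I|\pi_N\partial_vC|^2|\partial_\theta C|\,d\theta\,dv$; $ds=|\dot c|d\theta$ is arclength. *)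

theory Defs
  imports "HOL-Analysis.Analysis"
begin

text \<open>S^1 = R / 2 pi Z is modelled by 2 pi-periodic functions on the reals.
  A closed curve is c :: real => real^'n with c (t + 2 pi) = c t.\<close>

definition periodic_curve :: "(real \<Rightarrow> 'a) \<Rightarrow> bool" where
  "periodic_curve c \<longleftrightarrow> (\<forall>t. c (t + 2 * pi) = c t)"

definition smooth_curve :: "(real \<Rightarrow> 'a::real_normed_vector) \<Rightarrow> bool" where
  "smooth_curve c \<longleftrightarrow> (\<exists>D :: nat \<Rightarrow> real \<Rightarrow> 'a. D 0 = c \<and>
      (\<forall>k t. (D k has_vector_derivative D (Suc k) t) (at t)))"

definition smooth_regular_closed_curve :: "(real \<Rightarrow> 'a::real_normed_vector) \<Rightarrow> bool" where
  "smooth_regular_closed_curve c \<longleftrightarrow> periodic_curve c \<and> smooth_curve c \<and>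
      (\<forall>t. vector_derivative c (at t) \<noteq> 0)"

definition locally_lipschitz_on :: "(real \<times> real) set \<Rightarrow> (real \<times> real \<Rightarrow> 'a::metric_space) \<Rightarrow> bool" where
  "locally_lipschitz_on S f \<longleftrightarrow> (\<forall>p\<in>S. \<exists>e>0. \<exists>L. \<forall>q\<in>ball p e \<inter> S. \<forall>r\<in>ball p e \<inter> S.
      dist (f q) (f r) \<le> L * dist q r)"

definition homotopy_class :: "(real \<Rightarrow> 'a::real_normed_vector) \<Rightarrow> (real \<Rightarrow> 'a) \<Rightarrow> (real \<Rightarrow> real \<Rightarrow> 'a) set" where
  "homotopy_class c0 c1 = {C. (\<forall>\<theta> v. C (\<theta> + 2 * pi) v = C \<theta> v) \<and>
      continuous_on (UNIV \<times> {0..1}) (\<lambda>(\<theta>, v). C \<theta> v) \<and>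
      locally_lipschitz_on (UNIV \<times> {0<..<1}) (\<lambda>(\<theta>, v). C \<theta> v) \<and>
      (\<forall>\<theta>. C \<theta> 0 = c0 \<theta>) \<and> (\<forall>\<theta>. C \<theta> 1 = c1 \<theta>)}"

text \<open>Partial derivatives (set to 0 where they do not exist, a null set for
  locally Lipschitz maps by Rademacher's theorem).\<close>
definition d_theta :: "(real \<Rightarrow> real \<Rightarrow> 'a::real_normed_vector) \<Rightarrow> real \<Rightarrow> real \<Rightarrow> 'a" where
  "d_theta C \<theta> v = (if (\<lambda>t. C t v) differentiable (at \<theta>)
      then vector_derivative (\<lambda>t. C t v) (at \<theta>) else 0)"

definition d_v :: "(real \<Rightarrow> real \<Rightarrow> 'a::real_normed_vector) \<Rightarrow> real \<Rightarrow> real \<Rightarrow> 'a" where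
  "d_v C \<theta> v = (if (\<lambda>s. C \<theta> s) differentiable (at v)
      then vector_derivative (\<lambda>s. C \<theta> s) (at v) else 0)"

definition unit_tangent :: "(real \<Rightarrow> real \<Rightarrow> 'a::real_inner) \<Rightarrow> real \<Rightarrow> real \<Rightarrow> 'a" where
  "unit_tangent C \<theta> v = (if d_theta C \<theta> v = 0 then 0
      else d_theta C \<theta> v /\<^sub>R norm (d_theta C \<theta> v))"

definition normal_proj :: "(real \<Rightarrow> real \<Rightarrow> 'a::real_inner) \<Rightarrow> real \<Rightarrow> real \<Rightarrow> 'a \<Rightarrow> 'a" where
  "normal_proj C \<theta> v w = w - (w \<bullet> unit_tangent C \<theta> v) *\<^sub>R unit_tangent C \<theta> v"

definition energy_N :: "(real \<Rightarrow> real \<Rightarrow> 'a::real_inner) \<Rightarrow> ennreal" where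
  "energy_N C = (\<integral>\<^sup>+ p. indicator ({0..2*pi} \<times> {0..1}) p *
      ennreal ((norm (normal_proj C (fst p) (snd p) (d_v C (fst p) (snd p))))\<^sup>2
               * norm (d_theta C (fst p) (snd p))) \<partial>lborel)"

end

theory Submission
  imports Defs
begin


lemma tri_le: "arccos (cos x) \<le> \<bar>x - of_int j * (2 * pi)\<bar>"
proof (cases "\<bar>x - of_int j * (2 * pi)\<bar> \<le> pi")
  case True
  have "arccos (cos x) = arccos (cos (x - of_int j * (2 * pi)))"
    using cos_int_2pin sin_int_2pin by (simp add: cos_diff mult.commute)
  also have "\<dots> = \<bar>x - of_int j * (2 * pi)\<bar>" using arccos_cos_eq_abs True by blast
  finally show ?thesis by simp
next
  case False
  have "arccos (cos x) \<le> pi" by (simp add: arccos_ubound)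
  with False show ?thesis by simp
qed

lemma tri_lip: "\<bar>arccos (cos x) - arccos (cos y)\<bar> \<le> \<bar>x - y\<bar>"
proof -
  have *: "arccos (cos x) \<le> arccos (cos y) + \<bar>x - y\<bar>" for x y
  proof -
    obtain k where k: "arccos (cos y) = \<bar>y - of_int k * (2 * pi)\<bar>" using arccos_cos_eq_abs_2pi by blast
    have "arccos (cos x) \<le> \<bar>x - of_int k * (2 * pi)\<bar>" by (rule tri_le)
    also have "\<dots> \<le> \<bar>y - of_int k * (2 * pi)\<bar> + \<bar>x - y\<bar>" by simp
    finally show ?thesis using k by simp
  qed
  from *[of x y] *[of y x] show ?thesis by (simp add: abs_minus_commute)
qed

lemma tri_deriv:
  assumes "sin x \<noteq> 0"
  shows "((\<lambda>x. arccos (cos x)) has_real_derivative sgn (sin x)) (at x)"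
proof -
  have s: "(sin x)\<^sup>2 > 0" using assms by simp
  have c: "(cos x)\<^sup>2 < 1" using s sin_cos_squared_add[of x] by linarith
  have ca: "\<bar>cos x\<bar> < 1" using c abs_square_less_1 by blast
  have c1: "-1 < cos x" "cos x < 1" using ca by linarith+
  have e: "1 - (cos x)\<^sup>2 = (sin x)\<^sup>2" using sin_cos_squared_add[of x] by linarith
  have "((\<lambda>x. arccos (cos x)) has_real_derivative inverse (- sqrt (1 - (cos x)\<^sup>2)) * (- sin x)) (at x)"
    by (rule DERIV_chain2[where f=arccos and g=cos, OF DERIV_arccos[OF c1] DERIV_cos])
  moreover have "inverse (- sqrt (1 - (cos x)\<^sup>2)) * (- sin x) = sgn (sin x)"
  proof -
    have "sqrt (1 - (cos x)\<^sup>2) = \<bar>sin x\<bar>" unfolding e by (rule real_sqrt_abs)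
    then show ?thesis using assms by (cases "sin x > 0") (auto simp: sgn_if)
  qed
  ultimately show ?thesis by simp
qed

lemma tri_range: "0 \<le> arccos (cos x)" "arccos (cos x) \<le> pi"
  by (auto simp: arccos_lbound arccos_ubound)

lemma null_fst_countable:
  assumes "countable Z"
  shows "{p :: real \<times> real. fst p \<in> Z} \<in> null_sets lborel"
proof -
  have eq: "{p :: real \<times> real. fst p \<in> Z} = Z \<times> UNIV" by auto
  have Zn: "Z \<in> null_sets lborel" using assms by (rule countable_imp_null_set_lborel)
  have "Z \<times> (UNIV :: real set) \<in> null_sets (lborel \<Otimes>\<^sub>M lborel)"
    using Zn by (intro lborel.times_in_null_sets1) auto
  then show ?thesis unfolding eq lborel_prod .
qed

lemma box_measure: "emeasure lborel ({0..2*pi} \<times> {0..1::real}) = ennreal (2*pi)"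
proof -
  have "emeasure (lborel \<Otimes>\<^sub>M lborel) ({0..2*pi} \<times> {0..1::real}) = emeasure lborel {0..2*pi::real} * emeasure lborel {0..1::real}"
    by (intro lborel.emeasure_pair_measure_Times) auto
  then show ?thesis unfolding lborel_prod by simp
qed



lemma proj_norm:
  fixes x T :: "'a::real_inner"
  assumes "norm T = 1"
  shows "(norm (x - (x \<bullet> T) *\<^sub>R T))\<^sup>2 = (norm x)\<^sup>2 - (x \<bullet> T)\<^sup>2"
proof -
  have TT: "T \<bullet> T = 1" using assms by (simp add: norm_eq_1)
  have "(x - (x \<bullet> T) *\<^sub>R T) \<bullet> (x - (x \<bullet> T) *\<^sub>R T) = x \<bullet> x - (x \<bullet> T)\<^sup>2"
    by (simp add: inner_diff_left inner_diff_right TT inner_commute power2_eq_square)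
  then show ?thesis by (simp add: power2_norm_eq_inner)
qed

lemma proj_le:
  fixes x T :: "'a::real_inner"
  assumes "norm T = 1"
  shows "(norm (x - (x \<bullet> T) *\<^sub>R T))\<^sup>2 \<le> (norm x)\<^sup>2"
  using proj_norm[OF assms] by simp

lemma proj_shift:
  fixes x \<tau> :: "'a::real_inner"
  assumes "\<tau> \<noteq> 0"
  defines "T \<equiv> \<tau> /\<^sub>R norm \<tau>"
  shows "(x - l *\<^sub>R \<tau>) - ((x - l *\<^sub>R \<tau>) \<bullet> T) *\<^sub>R T = x - (x \<bullet> T) *\<^sub>R T"
proof -
  have n: "norm \<tau> \<noteq> 0" using assms by simp
  have "\<tau> \<bullet> T = norm \<tau>"
    using n by (simp add: T_def power2_norm_eq_inner[symmetric] power2_eq_square)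
  then have "(\<tau> \<bullet> T) *\<^sub>R T = \<tau>" using n by (simp add: T_def)
  then have "((l *\<^sub>R \<tau>) \<bullet> T) *\<^sub>R T = l *\<^sub>R \<tau>" by (metis inner_scaleR_left scaleR_scaleR)
  then show ?thesis by (simp add: inner_diff_left algebra_simps)
qed

lemma integrand_bound:
  fixes a d :: "'a::real_inner" and p u g N M :: real
  defines "\<tau> \<equiv> a + p *\<^sub>R d" and "w \<equiv> u *\<^sub>R d"
  defines "T \<equiv> (if \<tau> = 0 then 0 else \<tau> /\<^sub>R norm \<tau>)"
  assumes aM: "norm a \<le> M" and dM: "norm d \<le> M" and ug: "u\<^sup>2 \<le> 196 * g"
    and pg: "\<bar>p\<bar> = N * g" and g0: "0 \<le> g" and N1: "1 \<le> N"
  shows "(norm (w - (w \<bullet> T) *\<^sub>R T))\<^sup>2 * norm \<tau> \<le> 392 * M^3 / N"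
proof -
  have M0: "0 \<le> M" using aM norm_ge_zero order_trans by blast
  have rhs0: "0 \<le> 392 * M^3 / N" using M0 N1 by simp
  show ?thesis
  proof (cases "\<tau> = 0")
    case True then show ?thesis using rhs0 by simp
  next
    case tn: False
    then have T: "T = \<tau> /\<^sub>R norm \<tau>" "norm T = 1" by (auto simp: T_def)
    define P where "P = (norm (w - (w \<bullet> T) *\<^sub>R T))\<^sup>2"
    have P0: "0 \<le> P" by (simp add: P_def)
    have tau_le: "norm \<tau> \<le> M + \<bar>p\<bar> * M"
    proof -
      have "norm \<tau> \<le> norm a + \<bar>p\<bar> * norm d" unfolding \<tau>_def
        by (metis norm_scaleR norm_triangle_ineq)
      also have "\<dots> \<le> M + \<bar>p\<bar> * M" using aM dM by (intro add_mono mult_left_mono) auto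
      finally show ?thesis .
    qed
    show ?thesis
    proof (cases "N * g \<ge> 1")
      case True
      then have gpos: "g > 0" using N1 g0 by (cases "g = 0") auto
      have pne: "p \<noteq> 0" using pg True by auto
      have "P = (norm ((w - (u/p) *\<^sub>R \<tau>) - ((w - (u/p) *\<^sub>R \<tau>) \<bullet> T) *\<^sub>R T))\<^sup>2"
        unfolding P_def T(1) by (simp only: proj_shift[OF tn])
      also have "\<dots> \<le> (norm (w - (u/p) *\<^sub>R \<tau>))\<^sup>2" by (rule proj_le[OF T(2)])
      also have "w - (u/p) *\<^sub>R \<tau> = - ((u/p) *\<^sub>R a)"
        using pne by (simp add: w_def \<tau>_def scaleR_add_right algebra_simps)
      also have "(norm (- ((u/p) *\<^sub>R a)))\<^sup>2 = u\<^sup>2 / p\<^sup>2 * (norm a)\<^sup>2"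
        by (simp add: power_mult_distrib power_divide)
      also have "\<dots> \<le> u\<^sup>2 / p\<^sup>2 * M\<^sup>2"
        using aM by (intro mult_left_mono power_mono) auto
      finally have Pb: "P \<le> u\<^sup>2 / p\<^sup>2 * M\<^sup>2" .
      have "P * norm \<tau> \<le> (u\<^sup>2 / p\<^sup>2 * M\<^sup>2) * (M + \<bar>p\<bar> * M)"
        using Pb tau_le P0 M0 by (intro mult_mono) auto
      also have "\<dots> = u\<^sup>2 * M^3 / p\<^sup>2 + u\<^sup>2 * M^3 / \<bar>p\<bar>"
        using pne by (simp add: field_simps power2_eq_square power3_eq_cube)
      also have "u\<^sup>2 * M^3 / p\<^sup>2 \<le> 196 * M^3 / N"
      proof -
        have "u\<^sup>2 * M^3 / p\<^sup>2 \<le> (196 * g) * M^3 / p\<^sup>2"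
          using ug M0 by (intro divide_right_mono mult_right_mono) auto
        also have "(196 * g) * M^3 / p\<^sup>2 = 196 * M^3 / N / (N * g)"
        proof -
          have "p\<^sup>2 = (N*g)\<^sup>2" using pg by (metis power2_abs)
          then show ?thesis using gpos N1 by (simp add: field_simps power2_eq_square)
        qed
        also have "\<dots> \<le> 196 * M^3 / N"
        proof -
          have "M^3 \<le> (N * g) * M^3" using True M0 by (simp add: mult_le_cancel_right1)
          then show ?thesis using True M0 N1 by (simp add: divide_le_eq_1 field_simps)
        qed
        finally show ?thesis .
      qed
      also have "u\<^sup>2 * M^3 / \<bar>p\<bar> \<le> 196 * M^3 / N"
      proof -
        have "u\<^sup>2 * M^3 / \<bar>p\<bar> \<le> (196 * g) * M^3 / \<bar>p\<bar>"
          using ug M0 by (intro divide_right_mono mult_right_mono) auto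
        also have "\<dots> = 196 * M^3 / N" using pg gpos N1 by simp
        finally show ?thesis .
      qed
      finally show ?thesis unfolding P_def by simp
    next
      case False
      have "P \<le> (norm w)\<^sup>2" unfolding P_def by (rule proj_le[OF T(2)])
      also have "\<dots> = u\<^sup>2 * (norm d)\<^sup>2" by (simp add: w_def power_mult_distrib)
      also have "\<dots> \<le> (196 * g) * M\<^sup>2" using ug dM g0 by (intro mult_mono power_mono) auto
      finally have Pb: "P \<le> 196 * g * M\<^sup>2" .
      have "P * norm \<tau> \<le> (196 * g * M\<^sup>2) * (M + \<bar>p\<bar> * M)"
        using Pb tau_le P0 M0 by (intro mult_mono) auto
      also have "\<dots> = 196 * M^3 * (g + N * g * g)"
        using pg by (simp add: algebra_simps power2_eq_square power3_eq_cube)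
      also have "\<dots> \<le> 196 * M^3 * (2 / N)"
      proof -
        have "g \<le> 1 / N" using False N1 by (simp add: field_simps)
        moreover have "N * g * g \<le> g" using False g0 mult_right_mono[of "N*g" 1 g] by simp
        ultimately have "g + N * g * g \<le> 2 / N" by simp
        then show ?thesis using M0 by (intro mult_left_mono) auto
      qed
      finally show ?thesis unfolding P_def by simp
    qed
  qed
qed



lemma vd_lip:
  fixes f :: "real \<Rightarrow> 'a::real_normed_vector"
  assumes "\<And>x. x \<in> {a..b} \<Longrightarrow> (f has_vector_derivative f' x) (at x)"
    and "\<And>x. x \<in> {a..b} \<Longrightarrow> norm (f' x) \<le> B"
    and "x \<in> {a..b}" "y \<in> {a..b}"
  shows "norm (f x - f y) \<le> B * \<bar>x - y\<bar>"
proof -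
  have "norm (f x - f y) \<le> B * norm (x - y)"
  proof (rule differentiable_bound[of "{a..b}" f "\<lambda>x h. h *\<^sub>R f' x"])
    show "convex {a..b}" by simp
    fix z assume z: "z \<in> {a..b}"
    show "(f has_derivative (\<lambda>h. h *\<^sub>R f' z)) (at z within {a..b})"
      using assms(1)[OF z] unfolding has_vector_derivative_def by (rule has_derivative_at_withinI)
    have "onorm (\<lambda>h. h *\<^sub>R f' z) = onorm (\<lambda>h::real. h) * norm (f' z)"
      by (rule onorm_scaleR_left) (rule bounded_linear_ident)
    also have "\<dots> = norm (f' z)" using onorm_id[where 'a=real] by (simp add: id_def)
    finally show "onorm (\<lambda>h. h *\<^sub>R f' z) \<le> B" using assms(2)[OF z] by simp
  qed (use assms in auto)
  then show ?thesis by simp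
qed

definition phi :: "real \<Rightarrow> real" where "phi v = 3 * v\<^sup>2 - 2 * v^3"
definition gg :: "real \<Rightarrow> real" where "gg v = v\<^sup>2 * (1 - v)\<^sup>2"
definition tri :: "real \<Rightarrow> real \<Rightarrow> real" where "tri N \<theta> = arccos (cos (N * \<theta>))"
definition FF :: "real \<Rightarrow> real \<Rightarrow> real \<Rightarrow> real" where "FF N \<theta> v = phi v + gg v * tri N \<theta>"
definition Hom :: "(real \<Rightarrow> 'a::real_normed_vector) \<Rightarrow> (real \<Rightarrow> 'a) \<Rightarrow> real \<Rightarrow> real \<Rightarrow> real \<Rightarrow> 'a" where
  "Hom c0 c1 N \<theta> v = c0 \<theta> + FF N \<theta> v *\<^sub>R (c1 \<theta> - c0 \<theta>)"

lemma tri_bounds: "0 \<le> tri N \<theta>" "tri N \<theta> \<le> pi"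
  unfolding tri_def by (rule tri_range)+

lemma tri_lipN: "N \<ge> 0 \<Longrightarrow> \<bar>tri N x - tri N y\<bar> \<le> N * \<bar>x - y\<bar>"
  unfolding tri_def using tri_lip[of "N*x" "N*y"] by (simp add: right_diff_distrib[symmetric] abs_mult)

lemma phi_bounds: "0 \<le> v \<Longrightarrow> v \<le> 1 \<Longrightarrow> 0 \<le> phi v \<and> phi v \<le> 1"
proof -
  assume v: "0 \<le> v" "v \<le> 1"
  have "phi v = v\<^sup>2 * (3 - 2 * v)" by (simp add: phi_def power2_eq_square power3_eq_cube algebra_simps)
  moreover have "1 - phi v = (1 - v)\<^sup>2 * (1 + 2 * v)" by (simp add: phi_def power2_eq_square power3_eq_cube algebra_simps)
  moreover have "0 \<le> v\<^sup>2 * (3 - 2 * v)" using v by (intro mult_nonneg_nonneg) auto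
  moreover have "0 \<le> (1 - v)\<^sup>2 * (1 + 2 * v)" using v by (intro mult_nonneg_nonneg) auto
  ultimately show ?thesis by linarith
qed

lemma gg_bounds: "0 \<le> v \<Longrightarrow> v \<le> 1 \<Longrightarrow> 0 \<le> gg v \<and> gg v \<le> 1"
proof -
  assume v: "0 \<le> v" "v \<le> 1"
  have "v\<^sup>2 \<le> 1" "(1-v)\<^sup>2 \<le> 1" using v by (auto simp: power_le_one abs_le_iff power2_le_iff_abs_le)
  then show ?thesis unfolding gg_def by (simp add: mult_le_one)
qed

lemma FF_bounds: "0 \<le> v \<Longrightarrow> v \<le> 1 \<Longrightarrow> \<bar>FF N \<theta> v\<bar> \<le> 5"
proof -
  assume v: "0 \<le> v" "v \<le> 1"
  have "0 \<le> gg v * tri N \<theta>" "gg v * tri N \<theta> \<le> 1 * pi"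
    using gg_bounds[OF v] tri_bounds[of N \<theta>] mult_mono[of "gg v" 1 "tri N \<theta>" pi] by auto
  then show ?thesis using phi_bounds[OF v] pi_less_4 unfolding FF_def by auto
qed



lemma tri_has_deriv:
  assumes "sin (N * \<theta>) \<noteq> 0"
  shows "(tri N has_real_derivative (N * sgn (sin (N * \<theta>)))) (at \<theta>)"
proof -
  have "((\<lambda>x. arccos (cos x)) \<circ> (\<lambda>t. N * t) has_real_derivative sgn (sin (N * \<theta>)) * N) (at \<theta>)"
  proof (rule DERIV_chain[where g="\<lambda>t. N * t" and x=\<theta>])
    show "((\<lambda>x. arccos (cos x)) has_real_derivative sgn (sin (N * \<theta>))) (at (N * \<theta>))"
      by (rule tri_deriv[OF assms])
  qed (auto intro!: derivative_eq_intros)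
  then show ?thesis by (simp add: tri_def[abs_def] o_def mult.commute)
qed

lemma phi_deriv: "(phi has_real_derivative (6 * v - 6 * v\<^sup>2)) (at v)"
  unfolding phi_def[abs_def] by (auto intro!: derivative_eq_intros simp: power2_eq_square)

lemma gg_deriv: "(gg has_real_derivative (2 * v * (1 - v) * (1 - 2 * v))) (at v)"
  unfolding gg_def[abs_def] by (auto intro!: derivative_eq_intros simp: power2_eq_square algebra_simps)

lemma dv_Hom:
  "d_v (Hom c0 c1 N) \<theta> v = ((6 * v - 6 * v\<^sup>2) + (2 * v * (1 - v) * (1 - 2 * v)) * tri N \<theta>) *\<^sub>R (c1 \<theta> - c0 \<theta>)"
proof -
  have "((\<lambda>s. FF N \<theta> s) has_real_derivative ((6 * v - 6 * v\<^sup>2) + (2 * v * (1 - v) * (1 - 2 * v)) * tri N \<theta>)) (at v)"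
    unfolding FF_def by (auto intro!: derivative_eq_intros phi_deriv gg_deriv)
  then have "((\<lambda>s. Hom c0 c1 N \<theta> s) has_vector_derivative ((6 * v - 6 * v\<^sup>2) + (2 * v * (1 - v) * (1 - 2 * v)) * tri N \<theta>) *\<^sub>R (c1 \<theta> - c0 \<theta>)) (at v)"
    unfolding Hom_def by (auto intro!: derivative_eq_intros)
  then have D: "((\<lambda>s. Hom c0 c1 N \<theta> s) has_vector_derivative ((6 * v - 6 * v\<^sup>2) + (2 * v * (1 - v) * (1 - 2 * v)) * tri N \<theta>) *\<^sub>R (c1 \<theta> - c0 \<theta>)) (at v)" .
  have "(\<lambda>s. Hom c0 c1 N \<theta> s) differentiable (at v)" using D differentiableI_vector by blast
  then have "d_v (Hom c0 c1 N) \<theta> v = vector_derivative (\<lambda>s. Hom c0 c1 N \<theta> s) (at v)"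
    unfolding d_v_def by (rule if_P)
  then show ?thesis using vector_derivative_at[OF D] by (rule trans)
qed

lemma dtheta_Hom:
  assumes c0: "(c0 has_vector_derivative c0') (at \<theta>)" and c1: "(c1 has_vector_derivative c1') (at \<theta>)"
    and s: "sin (N * \<theta>) \<noteq> 0"
  shows "d_theta (Hom c0 c1 N) \<theta> v = (c0' + FF N \<theta> v *\<^sub>R (c1' - c0')) + (gg v * (N * sgn (sin (N * \<theta>)))) *\<^sub>R (c1 \<theta> - c0 \<theta>)"
proof -
  have F: "((\<lambda>t. FF N t v) has_real_derivative gg v * (N * sgn (sin (N * \<theta>)))) (at \<theta>)"
    unfolding FF_def by (auto intro!: derivative_eq_intros tri_has_deriv[OF s])
  have "((\<lambda>t. c0 t + FF N t v *\<^sub>R (c1 t - c0 t)) has_vector_derivative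
     (c0' + (FF N \<theta> v *\<^sub>R (c1' - c0') + (gg v * (N * sgn (sin (N * \<theta>)))) *\<^sub>R (c1 \<theta> - c0 \<theta>)))) (at \<theta>)"
    by (intro has_vector_derivative_add has_vector_derivative_scaleR has_vector_derivative_diff c0 c1 F)
  then have "((\<lambda>t. Hom c0 c1 N t v) has_vector_derivative (c0' + FF N \<theta> v *\<^sub>R (c1' - c0')) + (gg v * (N * sgn (sin (N * \<theta>)))) *\<^sub>R (c1 \<theta> - c0 \<theta>)) (at \<theta>)"
    unfolding Hom_def by (simp only: add.assoc)
  then have D: "((\<lambda>t. Hom c0 c1 N t v) has_vector_derivative (c0' + FF N \<theta> v *\<^sub>R (c1' - c0')) + (gg v * (N * sgn (sin (N * \<theta>)))) *\<^sub>R (c1 \<theta> - c0 \<theta>)) (at \<theta>)" .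
  have "(\<lambda>t. Hom c0 c1 N t v) differentiable (at \<theta>)" using D differentiableI_vector by blast
  then have "d_theta (Hom c0 c1 N) \<theta> v = vector_derivative (\<lambda>t. Hom c0 c1 N t v) (at \<theta>)"
    unfolding d_theta_def by (rule if_P)
  then show ?thesis using vector_derivative_at[OF D] by (rule trans)
qed



lemma u_bound:
  assumes "0 \<le> v" "v \<le> 1"
  shows "((6 * v - 6 * v\<^sup>2) + (2 * v * (1 - v) * (1 - 2 * v)) * tri N \<theta>)\<^sup>2 \<le> 196 * gg v"
proof -
  define S where "S = tri N \<theta>"
  have S: "0 \<le> S" "S \<le> pi" using tri_bounds unfolding S_def by auto
  have eq: "(6 * v - 6 * v\<^sup>2) + (2 * v * (1 - v) * (1 - 2 * v)) * S = (v * (1 - v)) * (6 + 2 * (1 - 2 * v) * S)"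
    by (simp add: algebra_simps power2_eq_square)
  have "\<bar>(1 - 2 * v) * S\<bar> \<le> 1 * 4"
    unfolding abs_mult using assms S pi_less_4 by (intro mult_mono) auto
  then have b: "\<bar>6 + 2 * (1 - 2 * v) * S\<bar> \<le> 14"
    unfolding mult.assoc[of 2] abs_le_iff by linarith
  have "(6 + 2 * (1 - 2 * v) * S)\<^sup>2 \<le> 14\<^sup>2"
    using b by (metis abs_ge_zero power2_abs power_mono)
  then have "(v * (1 - v))\<^sup>2 * (6 + 2 * (1 - 2 * v) * S)\<^sup>2 \<le> (v * (1 - v))\<^sup>2 * 196"
    by (intro mult_left_mono) auto
  moreover have "((6 * v - 6 * v\<^sup>2) + (2 * v * (1 - v) * (1 - 2 * v)) * tri N \<theta>)\<^sup>2 = (v * (1 - v))\<^sup>2 * (6 + 2 * (1 - 2 * v) * S)\<^sup>2"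
    unfolding S_def[symmetric] eq power_mult_distrib ..
  moreover have "gg v = (v * (1 - v))\<^sup>2" unfolding gg_def power_mult_distrib ..
  ultimately show ?thesis by (simp add: mult.commute)
qed

lemma countable_sin_zero:
  fixes N :: real
  assumes "N \<noteq> 0"
  shows "countable {\<theta>. sin (N * \<theta>) = 0}"
proof -
  have "{\<theta>. sin (N * \<theta>) = 0} \<subseteq> range (\<lambda>i::int. of_int i * pi / N)"
  proof
    fix \<theta> assume "\<theta> \<in> {\<theta>. sin (N * \<theta>) = 0}"
    then obtain i :: int where "N * \<theta> = of_int i * pi" using sin_zero_iff_int2 by auto
    then have "\<theta> = of_int i * pi / N" using assms by (simp add: field_simps)
    then show "\<theta> \<in> range (\<lambda>i::int. of_int i * pi / N)" by blast
  qed
  then show ?thesis by (rule countable_subset) simp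
qed

lemma energy_bound:
  fixes c0 c1 :: "real \<Rightarrow> 'a::real_inner"
  assumes d0: "\<And>t. (c0 has_vector_derivative c0' t) (at t)"
    and d1: "\<And>t. (c1 has_vector_derivative c1' t) (at t)"
    and b0: "\<And>t. t \<in> {0..2*pi} \<Longrightarrow> norm (c0' t) \<le> B0"
    and b1: "\<And>t. t \<in> {0..2*pi} \<Longrightarrow> norm (c1' t - c0' t) \<le> B1"
    and b2: "\<And>t. t \<in> {0..2*pi} \<Longrightarrow> norm (c1 t - c0 t) \<le> B2"
    and B0: "0 \<le> B0" and B1: "0 \<le> B1" and B2: "0 \<le> B2" and N1: "1 \<le> N"
  shows "energy_N (Hom c0 c1 N) \<le> ennreal (392 * (B0 + 5 * B1 + B2)^3 / N * (2 * pi))"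
proof -
  define M where "M = B0 + 5 * B1 + B2"
  define C where "C = Hom c0 c1 N"
  define box where "box = {0..2*pi} \<times> {0..1::real}"
  define K where "K = 392 * M^3 / N"
  have pt: "(norm (normal_proj C \<theta> v (d_v C \<theta> v)))\<^sup>2 * norm (d_theta C \<theta> v) \<le> K"
    if th: "\<theta> \<in> {0..2*pi}" and v: "v \<in> {0..1}" and s: "sin (N * \<theta>) \<noteq> 0" for \<theta> v
  proof -
    define a where "a = c0' \<theta> + FF N \<theta> v *\<^sub>R (c1' \<theta> - c0' \<theta>)"
    define d where "d = c1 \<theta> - c0 \<theta>"
    define p where "p = gg v * (N * sgn (sin (N * \<theta>)))"
    define u where "u = (6 * v - 6 * v\<^sup>2) + (2 * v * (1 - v) * (1 - 2 * v)) * tri N \<theta>"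
    have dt: "d_theta C \<theta> v = a + p *\<^sub>R d"
      unfolding C_def a_def p_def d_def by (rule dtheta_Hom[OF d0 d1 s])
    have dv: "d_v C \<theta> v = u *\<^sub>R d"
      unfolding C_def u_def d_def by (rule dv_Hom)
    have v01: "0 \<le> v" "v \<le> 1" using v by auto
    have aM: "norm a \<le> M"
    proof -
      have "norm a \<le> norm (c0' \<theta>) + \<bar>FF N \<theta> v\<bar> * norm (c1' \<theta> - c0' \<theta>)"
        unfolding a_def by (metis norm_scaleR norm_triangle_ineq)
      also have "\<dots> \<le> B0 + 5 * B1"
        using b0[OF th] b1[OF th] FF_bounds[OF v01] by (intro add_mono mult_mono) auto
      finally show ?thesis unfolding M_def using B2 by linarith
    qed
    have dM: "norm d \<le> M" using b2[OF th] B0 B1 unfolding d_def M_def by linarith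
    have gpos: "0 \<le> gg v" using gg_bounds[OF v01] by simp
    have pg: "\<bar>p\<bar> = N * gg v" using s N1 gpos unfolding p_def by (simp add: abs_mult)
    have ug: "u\<^sup>2 \<le> 196 * gg v" unfolding u_def by (rule u_bound[OF v01])
    have T: "unit_tangent C \<theta> v = (if a + p *\<^sub>R d = 0 then 0 else (a + p *\<^sub>R d) /\<^sub>R norm (a + p *\<^sub>R d))"
      unfolding unit_tangent_def dt ..
    have "(norm (normal_proj C \<theta> v (d_v C \<theta> v)))\<^sup>2 * norm (d_theta C \<theta> v)
        = (norm (u *\<^sub>R d - ((u *\<^sub>R d) \<bullet> (if a + p *\<^sub>R d = 0 then 0 else (a + p *\<^sub>R d) /\<^sub>R norm (a + p *\<^sub>R d))) *\<^sub>R
             (if a + p *\<^sub>R d = 0 then 0 else (a + p *\<^sub>R d) /\<^sub>R norm (a + p *\<^sub>R d))))\<^sup>2 * norm (a + p *\<^sub>R d)"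
      unfolding normal_proj_def T dv dt ..
    also have "\<dots> \<le> 392 * M^3 / N"
      by (rule integrand_bound[OF aM dM ug pg gpos N1])
    finally show ?thesis unfolding K_def .
  qed
  have K0: "0 \<le> K" unfolding K_def M_def using B0 B1 B2 N1 by simp
  have null: "{p :: real \<times> real. fst p \<in> {\<theta>. sin (N * \<theta>) = 0}} \<in> null_sets lborel"
    by (rule null_fst_countable[OF countable_sin_zero]) (use N1 in simp)
  have ae: "AE p in lborel. indicator box p * ennreal ((norm (normal_proj C (fst p) (snd p) (d_v C (fst p) (snd p))))\<^sup>2 * norm (d_theta C (fst p) (snd p)))
      \<le> ennreal K * indicator box p"
    (is "AE p in lborel. ?Q p")
  proof -
    have Qp: "?Q p" if s: "sin (N * fst p) \<noteq> 0" for p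
    proof (cases "p \<in> box")
      case True
      have "fst p \<in> {0..2*pi}" "snd p \<in> {0..1}" using True unfolding box_def by auto
      from pt[OF this s] show ?thesis using True by (simp add: ennreal_leI)
    qed simp
    show ?thesis by (rule AE_I'[OF null]) (use Qp in blast)
  qed
  have "energy_N C \<le> (\<integral>\<^sup>+ p. ennreal K * indicator box p \<partial>lborel)"
    unfolding energy_N_def box_def[symmetric] by (rule nn_integral_mono_AE[OF ae])
  also have "\<dots> = ennreal K * emeasure lborel box"
    by (rule nn_integral_cmult_indicator) (simp add: box_def borel_closed closed_Times)
  also have "\<dots> = ennreal (K * (2 * pi))"
    unfolding box_def box_measure using K0 by (simp add: ennreal_mult')
  finally show ?thesis unfolding C_def K_def M_def .
qed



lemma bound_on_Icc:
  fixes f :: "real \<Rightarrow> 'a::real_normed_vector"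
  assumes "continuous_on UNIV f"
  shows "\<exists>B\<ge>0. \<forall>t\<in>{a..b}. norm (f t) \<le> B"
proof -
  have "bounded (f ` {a..b})"
    by (rule compact_imp_bounded[OF compact_continuous_image[OF continuous_on_subset[OF assms] compact_Icc]]) simp
  then obtain B where "\<forall>x\<in>f ` {a..b}. norm x \<le> B" by (auto simp: bounded_iff)
  then show ?thesis by (intro exI[of _ "max B 0"]) force
qed

lemma vd_cont:
  fixes f :: "real \<Rightarrow> 'a::real_normed_vector"
  assumes "\<And>t. (f has_vector_derivative f' t) (at t)"
  shows "continuous_on UNIV f"
  by (rule continuous_at_imp_continuous_on) (use assms has_vector_derivative_continuous in blast)

lemma phi_lip: "v \<in> {0..1} \<Longrightarrow> v' \<in> {0..1} \<Longrightarrow> \<bar>phi v - phi v'\<bar> \<le> 6 * \<bar>v - v'\<bar>"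
proof -
  assume v: "v \<in> {0..1}" "v' \<in> {0..1}"
  have "norm (phi v - phi v') \<le> 6 * \<bar>v - v'\<bar>"
  proof (rule vd_lip[of 0 1 phi "\<lambda>v. 6 * v - 6 * v\<^sup>2"])
    fix x :: real assume x: "x \<in> {0..1}"
    show "(phi has_vector_derivative 6 * x - 6 * x\<^sup>2) (at x)"
      using phi_deriv[of x] by (simp add: has_real_derivative_iff_has_vector_derivative)
    have "0 \<le> x * (1 - x)" "x * (1 - x) \<le> 1" using x by (auto intro: mult_le_one)
    then show "norm (6 * x - 6 * x\<^sup>2) \<le> 6" by (simp add: power2_eq_square algebra_simps)
  qed (use v in auto)
  then show ?thesis by simp
qed

lemma gg_lip: "v \<in> {0..1} \<Longrightarrow> v' \<in> {0..1} \<Longrightarrow> \<bar>gg v - gg v'\<bar> \<le> 2 * \<bar>v - v'\<bar>"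
proof -
  assume v: "v \<in> {0..1}" "v' \<in> {0..1}"
  have "norm (gg v - gg v') \<le> 2 * \<bar>v - v'\<bar>"
  proof (rule vd_lip[of 0 1 gg "\<lambda>v. 2 * v * (1 - v) * (1 - 2 * v)"])
    fix x :: real assume x: "x \<in> {0..1}"
    show "(gg has_vector_derivative 2 * x * (1 - x) * (1 - 2 * x)) (at x)"
      using gg_deriv[of x] by (simp add: has_real_derivative_iff_has_vector_derivative)
    have a: "\<bar>x * (1 - x)\<bar> \<le> 1" using x by (auto intro: mult_le_one)
    have b: "\<bar>1 - 2 * x\<bar> \<le> 1" using x by auto
    have "\<bar>x * (1 - x) * (1 - 2 * x)\<bar> \<le> 1 * 1"
      unfolding abs_mult[of "x * (1 - x)"] using a b by (intro mult_mono) auto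
    then show "norm (2 * x * (1 - x) * (1 - 2 * x)) \<le> 2" by (simp add: abs_mult)
  qed (use v in auto)
  then show ?thesis by simp
qed

lemma FF_lip_v:
  assumes "v \<in> {0..1}" "v' \<in> {0..1}"
  shows "\<bar>FF N \<theta> v - FF N \<theta> v'\<bar> \<le> 14 * \<bar>v - v'\<bar>"
proof -
  have "FF N \<theta> v - FF N \<theta> v' = (phi v - phi v') + (gg v - gg v') * tri N \<theta>"
    by (simp add: FF_def algebra_simps)
  then have "\<bar>FF N \<theta> v - FF N \<theta> v'\<bar> \<le> \<bar>phi v - phi v'\<bar> + \<bar>gg v - gg v'\<bar> * \<bar>tri N \<theta>\<bar>"
    by (simp add: abs_mult[symmetric] abs_triangle_ineq)
  also have "\<dots> \<le> 6 * \<bar>v - v'\<bar> + (2 * \<bar>v - v'\<bar>) * 4"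
    using phi_lip[OF assms] gg_lip[OF assms] tri_bounds[of N \<theta>] pi_less_4
    by (intro add_mono mult_mono) auto
  finally show ?thesis by simp
qed

lemma FF_lip_theta:
  assumes "v \<in> {0..1}" "0 \<le> N"
  shows "\<bar>FF N \<theta> v - FF N \<theta>' v\<bar> \<le> N * \<bar>\<theta> - \<theta>'\<bar>"
proof -
  have "FF N \<theta> v - FF N \<theta>' v = gg v * (tri N \<theta> - tri N \<theta>')"
    by (simp add: FF_def algebra_simps)
  then have "\<bar>FF N \<theta> v - FF N \<theta>' v\<bar> = gg v * \<bar>tri N \<theta> - tri N \<theta>'\<bar>"
    using gg_bounds[of v] assms by (simp add: abs_mult)
  also have "\<dots> \<le> 1 * (N * \<bar>\<theta> - \<theta>'\<bar>)"
    using gg_bounds[of v] assms tri_lipN[OF assms(2)] by (intro mult_mono) auto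
  finally show ?thesis by simp
qed



lemma diff_gen:
  fixes x x' D D' :: "'a::real_vector"
  shows "(x + a *\<^sub>R D) - (x' + b *\<^sub>R D') = (x - x') + (a - b) *\<^sub>R D + b *\<^sub>R (D - D')"
  by (simp add: scaleR_diff_left scaleR_diff_right)

lemma diff_gen2:
  fixes x D :: "'a::real_vector"
  shows "(x + a *\<^sub>R D) - (x + b *\<^sub>R D) = (a - b) *\<^sub>R D"
  by (simp add: scaleR_diff_left)

lemma norm3:
  fixes A B C :: "'a::real_normed_vector"
  shows "norm (A + B + C) \<le> norm A + norm B + norm C"
  by (meson add_mono norm_triangle_ineq order_trans order_refl)

lemma Hom_in_class:
  fixes c0 c1 :: "real \<Rightarrow> 'a::real_normed_vector" and n :: nat
  assumes p0: "periodic_curve c0" and p1: "periodic_curve c1"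
    and d0: "\<And>t. (c0 has_vector_derivative c0' t) (at t)"
    and d1: "\<And>t. (c1 has_vector_derivative c1' t) (at t)"
    and cont0': "continuous_on UNIV c0'" and cont1': "continuous_on UNIV c1'"
  shows "Hom c0 c1 (real n) \<in> homotopy_class c0 c1"
proof -
  define N where "N = real n"
  define H where "H = Hom c0 c1 N"
  have N0: "0 \<le> N" unfolding N_def by simp
  have cont0: "continuous_on UNIV c0" by (rule vd_cont[OF d0])
  have cont1: "continuous_on UNIV c1" by (rule vd_cont[OF d1])
  have per: "H (\<theta> + 2 * pi) v = H \<theta> v" for \<theta> v
  proof -
    have "N * (\<theta> + 2 * pi) = N * \<theta> + 2 * real n * pi" by (simp add: N_def algebra_simps)
    then have "tri N (\<theta> + 2 * pi) = tri N \<theta>" unfolding tri_def by (simp add: cos_add)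
    moreover have "c0 (\<theta> + 2 * pi) = c0 \<theta>" "c1 (\<theta> + 2 * pi) = c1 \<theta>"
      using p0 p1 unfolding periodic_curve_def by auto
    ultimately show ?thesis unfolding H_def Hom_def FF_def by simp
  qed
  have trilip: "N-lipschitz_on UNIV (tri N)"
    by (rule lipschitz_onI) (use tri_lipN[OF N0] N0 in \<open>auto simp: dist_real_def\<close>)
  have tricont: "continuous_on UNIV (tri N)"
    using lipschitz_on_continuous_on[OF trilip] .
  have contH: "continuous_on UNIV (\<lambda>x::real\<times>real. H (fst x) (snd x))"
  proof -
    have a: "continuous_on UNIV (\<lambda>x::real\<times>real. c0 (fst x))"
      by (rule continuous_on_compose2[OF cont0 continuous_on_fst]) auto
    have b: "continuous_on UNIV (\<lambda>x::real\<times>real. c1 (fst x))"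
      by (rule continuous_on_compose2[OF cont1 continuous_on_fst]) auto
    have c: "continuous_on UNIV (\<lambda>x::real\<times>real. tri N (fst x))"
      by (rule continuous_on_compose2[OF tricont continuous_on_fst]) auto
    show ?thesis unfolding H_def Hom_def FF_def phi_def gg_def
      by (intro continuous_intros a b c)
  qed
  have lip: "locally_lipschitz_on (UNIV \<times> {0<..<1}) (\<lambda>(\<theta>, v). H \<theta> v)"
    unfolding locally_lipschitz_on_def
  proof
    fix p :: "real \<times> real" assume "p \<in> UNIV \<times> {0<..<1}"
    obtain \<theta>0 v0 where p: "p = (\<theta>0, v0)" by (cases p)
    define J where "J = {\<theta>0 - 1 .. \<theta>0 + 1}"
    obtain L0 where L0: "L0 \<ge> 0" "\<forall>t\<in>J. norm (c0' t) \<le> L0"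
      using bound_on_Icc[OF cont0'] unfolding J_def by blast
    obtain Ld where Ld: "Ld \<ge> 0" "\<forall>t\<in>J. norm (c1' t - c0' t) \<le> Ld"
      using bound_on_Icc[OF continuous_on_diff[OF cont1' cont0']] unfolding J_def by blast
    obtain Kd where Kd: "Kd \<ge> 0" "\<forall>t\<in>J. norm (c1 t - c0 t) \<le> Kd"
      using bound_on_Icc[OF continuous_on_diff[OF cont1 cont0]] unfolding J_def by blast
    have lc0: "norm (c0 x - c0 y) \<le> L0 * \<bar>x - y\<bar>" if "x \<in> J" "y \<in> J" for x y
      by (rule vd_lip[OF d0]) (use L0 that in \<open>auto simp: J_def\<close>)
    have ldd: "norm ((c1 x - c0 x) - (c1 y - c0 y)) \<le> Ld * \<bar>x - y\<bar>" if "x \<in> J" "y \<in> J" for x y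
      by (rule vd_lip[where f="\<lambda>t. c1 t - c0 t" and f'="\<lambda>t. c1' t - c0' t"])
        (use Ld that d0 d1 in \<open>auto simp: J_def intro!: has_vector_derivative_diff\<close>)
    define L where "L = L0 + N * Kd + 5 * Ld + 14 * Kd"
    show "\<exists>e>0. \<exists>L. \<forall>q\<in>ball p e \<inter> UNIV \<times> {0<..<1}. \<forall>r\<in>ball p e \<inter> UNIV \<times> {0<..<1}.
            dist ((\<lambda>(\<theta>, v). H \<theta> v) q) ((\<lambda>(\<theta>, v). H \<theta> v) r) \<le> L * dist q r"
    proof (rule exI[of _ 1], rule conjI, simp, rule exI[of _ L], intro ballI)
      fix q r
      assume q: "q \<in> ball p 1 \<inter> UNIV \<times> {0<..<1}" and r: "r \<in> ball p 1 \<inter> UNIV \<times> {0<..<1}"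
      obtain \<theta> v where qq: "q = (\<theta>, v)" by (cases q)
      obtain \<theta>' v' where rr: "r = (\<theta>', v')" by (cases r)
      have "dist \<theta>0 \<theta> < 1" using q dist_fst_le[of p q] unfolding p qq by auto
      then have th: "\<theta> \<in> J" unfolding J_def dist_real_def by auto
      have "dist \<theta>0 \<theta>' < 1" using r dist_fst_le[of p r] unfolding p rr by auto
      then have th': "\<theta>' \<in> J" unfolding J_def dist_real_def by auto
      have vv: "v \<in> {0..1}" "v' \<in> {0..1}" using q r unfolding qq rr by auto
      have dth: "\<bar>\<theta> - \<theta>'\<bar> \<le> dist q r" using dist_fst_le[of q r] unfolding qq rr by (simp add: dist_real_def)
      have dvv: "\<bar>v - v'\<bar> \<le> dist q r" using dist_snd_le[of q r] unfolding qq rr by (simp add: dist_real_def)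
      define dd where "dd = (\<lambda>t. c1 t - c0 t)"
      have e1: "H \<theta> v - H \<theta>' v = (c0 \<theta> - c0 \<theta>') + (FF N \<theta> v - FF N \<theta>' v) *\<^sub>R dd \<theta> + FF N \<theta>' v *\<^sub>R (dd \<theta> - dd \<theta>')"
        unfolding H_def Hom_def dd_def by (rule diff_gen)
      have n1: "norm (H \<theta> v - H \<theta>' v) \<le> L0 * \<bar>\<theta> - \<theta>'\<bar> + (N * \<bar>\<theta> - \<theta>'\<bar>) * Kd + 5 * (Ld * \<bar>\<theta> - \<theta>'\<bar>)"
      proof -
        have "norm (H \<theta> v - H \<theta>' v) \<le> norm (c0 \<theta> - c0 \<theta>') + \<bar>FF N \<theta> v - FF N \<theta>' v\<bar> * norm (dd \<theta>) + \<bar>FF N \<theta>' v\<bar> * norm (dd \<theta> - dd \<theta>')"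
          unfolding e1 using norm3 by (metis norm_scaleR)
        also have "\<dots> \<le> L0 * \<bar>\<theta> - \<theta>'\<bar> + (N * \<bar>\<theta> - \<theta>'\<bar>) * Kd + 5 * (Ld * \<bar>\<theta> - \<theta>'\<bar>)"
          using lc0[OF th th'] FF_lip_theta[OF vv(1) N0, of \<theta> \<theta>'] Kd th FF_bounds[of v N \<theta>'] vv
            ldd[OF th th'] unfolding dd_def
          by (intro add_mono mult_mono) auto
        finally show ?thesis .
      qed
      have e2: "H \<theta>' v - H \<theta>' v' = (FF N \<theta>' v - FF N \<theta>' v') *\<^sub>R dd \<theta>'"
        unfolding H_def Hom_def dd_def by (rule diff_gen2)
      have n2: "norm (H \<theta>' v - H \<theta>' v') \<le> (14 * \<bar>v - v'\<bar>) * Kd"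
        unfolding e2 norm_scaleR using FF_lip_v[OF vv, of N \<theta>'] Kd th' unfolding dd_def
        by (intro mult_mono) auto
      have "dist (H \<theta> v) (H \<theta>' v') \<le> norm (H \<theta> v - H \<theta>' v) + norm (H \<theta>' v - H \<theta>' v')"
        unfolding dist_norm by (rule norm_diff_triangle_le) (rule order_refl)+
      also have "\<dots> \<le> (L0 * \<bar>\<theta> - \<theta>'\<bar> + (N * \<bar>\<theta> - \<theta>'\<bar>) * Kd + 5 * (Ld * \<bar>\<theta> - \<theta>'\<bar>)) + (14 * \<bar>v - v'\<bar>) * Kd"
        using n1 n2 by (rule add_mono)
      also have "\<dots> = (L0 + N * Kd + 5 * Ld) * \<bar>\<theta> - \<theta>'\<bar> + (14 * Kd) * \<bar>v - v'\<bar>"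
        by (simp add: algebra_simps)
      also have "\<dots> \<le> (L0 + N * Kd + 5 * Ld) * dist q r + (14 * Kd) * dist q r"
        using dth dvv L0 Ld Kd N0 by (intro add_mono mult_left_mono) auto
      also have "\<dots> = L * dist q r" unfolding L_def by (simp add: algebra_simps)
      finally show "dist ((\<lambda>(\<theta>, v). H \<theta> v) q) ((\<lambda>(\<theta>, v). H \<theta> v) r) \<le> L * dist q r"
        unfolding qq rr by simp
    qed
  qed
  have "H \<in> homotopy_class c0 c1"
    unfolding homotopy_class_def
  proof (intro CollectI conjI allI)
    fix \<theta> v show "H (\<theta> + 2 * pi) v = H \<theta> v" by (rule per)
  next
    show "continuous_on (UNIV \<times> {0..1}) (\<lambda>(\<theta>, v). H \<theta> v)"
      using continuous_on_subset[OF contH] by (simp add: case_prod_beta')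
  next
    show "locally_lipschitz_on (UNIV \<times> {0<..<1}) (\<lambda>(\<theta>, v). H \<theta> v)" by (rule lip)
  next
    fix \<theta> show "H \<theta> 0 = c0 \<theta>" by (simp add: H_def Hom_def FF_def phi_def gg_def)
  next
    fix \<theta> show "H \<theta> 1 = c1 \<theta>" by (simp add: H_def Hom_def FF_def phi_def gg_def)
  qed
  then show ?thesis unfolding H_def N_def .
qed



lemma smooth_data:
  fixes c :: "real \<Rightarrow> 'a::real_normed_vector"
  assumes "smooth_regular_closed_curve c"
  obtains c' where "periodic_curve c" "\<And>t. (c has_vector_derivative c' t) (at t)" "continuous_on UNIV c'"
proof -
  from assms have per: "periodic_curve c" and sm: "smooth_curve c"
    unfolding smooth_regular_closed_curve_def by auto
  from sm obtain D :: "nat \<Rightarrow> real \<Rightarrow> 'a" where D0: "D 0 = c"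
    and DS: "\<And>k t. (D k has_vector_derivative D (Suc k) t) (at t)"
    unfolding smooth_curve_def by blast
  have d: "(c has_vector_derivative D 1 t) (at t)" for t using DS[of 0 t] D0 by simp
  have "continuous_on UNIV (D 1)" by (rule vd_cont[OF DS[of 1]])
  with per d show ?thesis by (rule that)
qed

theorem mainTheorem13:
  fixes c0 c1 :: "real \<Rightarrow> real ^ 'n"
  assumes "CARD('n) \<ge> 2"
    and "smooth_regular_closed_curve c0"
    and "smooth_regular_closed_curve c1"
  shows "\<forall>\<epsilon>>0. \<exists>C\<in>homotopy_class c0 c1. energy_N C < ennreal \<epsilon>"
proof (intro allI impI)
  fix \<epsilon> :: real assume eps: "\<epsilon> > 0"
  obtain c0' where p0: "periodic_curve c0" and d0: "\<And>t. (c0 has_vector_derivative c0' t) (at t)"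
    and k0: "continuous_on UNIV c0'" using smooth_data[OF assms(2)] by blast
  obtain c1' where p1: "periodic_curve c1" and d1: "\<And>t. (c1 has_vector_derivative c1' t) (at t)"
    and k1: "continuous_on UNIV c1'" using smooth_data[OF assms(3)] by blast
  obtain B0 where B0: "B0 \<ge> 0" "\<forall>t\<in>{0..2*pi}. norm (c0' t) \<le> B0"
    using bound_on_Icc[OF k0] by blast
  obtain B1 where B1: "B1 \<ge> 0" "\<forall>t\<in>{0..2*pi}. norm (c1' t - c0' t) \<le> B1"
    using bound_on_Icc[OF continuous_on_diff[OF k1 k0]] by blast
  obtain B2 where B2: "B2 \<ge> 0" "\<forall>t\<in>{0..2*pi}. norm (c1 t - c0 t) \<le> B2"
    using bound_on_Icc[OF continuous_on_diff[OF vd_cont[OF d1] vd_cont[OF d0]]] by blast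
  define K where "K = 392 * (B0 + 5 * B1 + B2)^3 * (2 * pi)"
  have K0: "0 \<le> K" unfolding K_def using B0 B1 B2 by simp
  define n where "n = nat \<lceil>K / \<epsilon>\<rceil> + 1"
  have n1: "1 \<le> real n" unfolding n_def by simp
  have "K / \<epsilon> \<le> real (nat \<lceil>K / \<epsilon>\<rceil>)" by linarith
  then have "K / \<epsilon> < real n" unfolding n_def by simp
  then have "K < real n * \<epsilon>" using eps by (simp add: field_simps)
  then have lt: "K / real n < \<epsilon>" using n1 by (simp add: field_simps)
  have mem: "Hom c0 c1 (real n) \<in> homotopy_class c0 c1"
    by (rule Hom_in_class[OF p0 p1 d0 d1 k0 k1])
  have "energy_N (Hom c0 c1 (real n)) \<le> ennreal (392 * (B0 + 5 * B1 + B2)^3 / real n * (2 * pi))"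
    by (rule energy_bound[OF d0 d1]) (use B0 B1 B2 n1 in auto)
  also have "392 * (B0 + 5 * B1 + B2)^3 / real n * (2 * pi) = K / real n"
    unfolding K_def by simp
  also have "ennreal (K / real n) < ennreal \<epsilon>" using lt eps by (intro ennreal_lessI)
  finally show "\<exists>C\<in>homotopy_class c0 c1. energy_N C < ennreal \<epsilon>" using mem by blast
qed


end
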